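(* Let $\mathbb K$ be an infinite field, $k\ge2$, $R=\mathbb K[x_1,\ldots,x_k]$, and let $V=V_1\cup\cdots\cup V_m\subset\mathbb P^{k-1}$ be an essential subspace arrangement with $I(V_i)$ generated by $c_i$ linearly independent linear forms. Let $\aleph=1+\sum_{i=1}^m(c_i-1)$; for each $i$ let $\Lambda_i$ be a collection of $\aleph$ distinct linear forms in $I(V_i)$ any $c_i$ of which generate $I(V_i)$; let $\Lambda=(\ell_1,\ldots,\ell_n)$ be the distinct linear forms occurring in $\Lambda_1\cup\cdots\cup\Lambda_m$, and let $a=n-\aleph+1$. Let $\mathcal C_\Lambda=\phi(\mathbb K^k)\subseteq\mathbb K^n$, where $\phi:\mathbb K^k\to\mathbb K^n$, $\phi(v)=(\ell_1(v),\ldots,\ell_n(v))$, and for each $i$ let $\mathcal D_i=\phi(\widehat V_i)$, where $\widehat V_i\subseteq\mathbb K^k$ is the linear subspace which is the common zero locus of $I(V_i)$. Then each $\mathcal D_i$ is a subcode of $\mathcal C_\Lambda$ with $|\mathrm{Supp}(\mathcal D_i)|\le a-1$, and every subcode $\mathcal D\subseteq\mathcal C_\Lambda$ with $|\mathrm{Supp}(\mathcal D)|\le a-1$ is contained in $\mathcal D_{i_0}$ for some $i_0\in\{1,\ldots,m\}$. Thus $\mathcal D_1,\ldots,\mathcal D_m$ are the maximal subcodes of $\mathcal C_\Lambda$ of support size at most $a-1$.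
   Context: A subspace arrangement $V=V_1\cup\cdots\cup V_m$ (components $V_i$ linear subspaces of $\mathbb P^{k-1}$) is essential if $I(V_1)+\cdots+I(V_m)=\langle x_1,\ldots,x_k\rangle$. Since the $\ell_i$ generate $\langle x_1,\ldots,x_k\rangle$, $\phi$ is injective and $\mathcal C_\Lambda$ is an $[n,k]$ linear code (its generating matrix has as columns the coefficient vectors of the $\ell_i$). A subcode is a $\mathbb K$-linear subspace of $\mathcal C_\Lambda$. For a subcode $\mathcal D$, $\mathrm{Supp}(\mathcal D)=\{i:\exists (y_1,\ldots,y_n)\in\mathcal D\text{ with }y_i\ne0\}$. *)

theory Defs
  imports "HOL-Analysis.Analysis"
begin

text \<open>Linear forms on K^k are represented by their coefficient vectors in K^k;
  evaluation of the form with coefficient vector l at the point v.\<close>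
definition lin_eval :: "'a::field ^ 'k \<Rightarrow> 'a ^ 'k \<Rightarrow> 'a" where
  "lin_eval l v = (\<Sum>j\<in>UNIV. l $ j * v $ j)"

text \<open>Words of length n are functions nat to K that vanish outside the coordinates 0..n-1.
  The evaluation map phi: K^k to K^n, phi(v) = (l_1(v), ..., l_n(v)) (coordinates 0-indexed).\<close>
definition eval_map :: "nat \<Rightarrow> (nat \<Rightarrow> 'a::field ^ 'k) \<Rightarrow> 'a ^ 'k \<Rightarrow> (nat \<Rightarrow> 'a)" where
  "eval_map n ell v = (\<lambda>j. if j < n then lin_eval (ell j) v else 0)"

definition subcode :: "(nat \<Rightarrow> 'a::field) set \<Rightarrow> (nat \<Rightarrow> 'a) set \<Rightarrow> bool" where
  "subcode C D \<longleftrightarrow> D \<subseteq> C \<and> (\<lambda>_. 0) \<in> D \<and>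
     (\<forall>x\<in>D. \<forall>y\<in>D. (\<lambda>j. x j + y j) \<in> D) \<and>
     (\<forall>c. \<forall>x\<in>D. (\<lambda>j. c * x j) \<in> D)"

definition Supp :: "(nat \<Rightarrow> 'a::zero) set \<Rightarrow> nat set" where
  "Supp D = {j. \<exists>y\<in>D. y j \<noteq> 0}"

definition zero_locus :: "('a::field ^ 'k) set \<Rightarrow> ('a ^ 'k) set" where
  "zero_locus I = {v. \<forall>l\<in>I. lin_eval l v = 0}"

end

theory Submission
  imports Defs
begin

lemma le_add_l: "lin_eval (a + b) v = lin_eval a v + lin_eval b v"
  unfolding lin_eval_def by (simp add: distrib_right sum.distrib)
lemma le_scale_l: "lin_eval (c *s a) v = c * lin_eval a v"
  unfolding lin_eval_def by (simp add: sum_distrib_left mult.assoc)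
lemma le_zero_l: "lin_eval 0 v = 0"
  unfolding lin_eval_def by simp
lemma le_add_r: "lin_eval a (v + w) = lin_eval a v + lin_eval a w"
  unfolding lin_eval_def by (simp add: distrib_left sum.distrib)
lemma le_scale_r: "lin_eval a (c *s v) = c * lin_eval a v"
  unfolding lin_eval_def by (simp add: sum_distrib_left algebra_simps)
lemma le_zero_r: "lin_eval a 0 = 0"
  unfolding lin_eval_def by simp

lemma vanish_span:
  assumes "l \<in> vec.span S" "\<forall>s\<in>S. lin_eval s v = 0"
  shows "lin_eval l v = 0"
proof -
  have sub: "vec.subspace (Collect (\<lambda>l. lin_eval l v = 0))"
    unfolding vec.subspace_def by (simp add: le_add_l le_scale_l le_zero_l)
  show ?thesis using vec.span_induct[OF assms(1) sub] assms(2) by blast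
qed

lemma eval_map_add: "eval_map n ell (v + w) = (\<lambda>j. eval_map n ell v j + eval_map n ell w j)"
  unfolding eval_map_def by (auto simp: le_add_r)
lemma eval_map_scale: "eval_map n ell (c *s v) = (\<lambda>j. c * eval_map n ell v j)"
  unfolding eval_map_def by (auto simp: le_scale_r)
lemma eval_map_zero: "eval_map n ell 0 = (\<lambda>_. 0)"
  unfolding eval_map_def by (auto simp: le_zero_r)

lemma subcode_image:
  "subcode (eval_map n ell ` UNIV) (eval_map n ell ` zero_locus X)"
  unfolding subcode_def
proof (intro conjI ballI allI)
  show "(\<lambda>_. 0) \<in> eval_map n ell ` zero_locus X"
    by (rule image_eqI[of _ _ 0]) (auto simp: eval_map_zero zero_locus_def le_zero_r)
next
  fix x y assume "x \<in> eval_map n ell ` zero_locus X" "y \<in> eval_map n ell ` zero_locus X"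
  then obtain v w where "v \<in> zero_locus X" "w \<in> zero_locus X" "x = eval_map n ell v" "y = eval_map n ell w" by blast
  then show "(\<lambda>j. x j + y j) \<in> eval_map n ell ` zero_locus X"
    by (intro image_eqI[of _ _ "v + w"]) (auto simp: eval_map_add zero_locus_def le_add_r)
next
  fix c x assume "x \<in> eval_map n ell ` zero_locus X"
  then obtain v where "v \<in> zero_locus X" "x = eval_map n ell v" by blast
  then show "(\<lambda>j. c * x j) \<in> eval_map n ell ` zero_locus X"
    by (intro image_eqI[of _ _ "c *s v"]) (auto simp: eval_map_scale zero_locus_def le_scale_r)
qed auto

theorem proposition2p3:
  fixes m n :: nat
    and G :: "nat \<Rightarrow> ('a::field ^ 'k) set"   \<comment> \<open>G i: linearly independent generators of I(V_i)\<close>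
    and L :: "nat \<Rightarrow> ('a ^ 'k) set"          \<comment> \<open>L i = Lambda_i\<close>
    and ell :: "nat \<Rightarrow> 'a ^ 'k"                \<comment> \<open>ell 0, ..., ell (n-1) = Lambda\<close>
    and aleph :: int
  assumes infK: "infinite (UNIV :: 'a set)"
    and k2: "CARD('k) \<ge> 2"
    and G_fin: "\<forall>i<m. finite (G i)"
    and G_indep: "\<forall>i<m. vec.independent (G i)"
    and components: "\<forall>i<m. \<forall>j<m. i \<noteq> j \<longrightarrow> \<not> vec.span (G j) \<subseteq> vec.span (G i)"
    and essential: "vec.span (\<Union>i<m. G i) = UNIV"
    and aleph_def: "aleph = 1 + (\<Sum>i<m. (int (card (G i)) - 1))"
    and L_fin: "\<forall>i<m. finite (L i)"
    and L_card: "\<forall>i<m. int (card (L i)) = aleph"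
    and L_sub: "\<forall>i<m. L i \<subseteq> vec.span (G i)"
    and L_gen: "\<forall>i<m. \<forall>S. S \<subseteq> L i \<and> card S = card (G i) \<longrightarrow> vec.span S = vec.span (G i)"
    and ell_bij: "bij_betw ell {..<n} (\<Union>i<m. L i)"
  shows "(\<forall>i<m. subcode (eval_map n ell ` UNIV) (eval_map n ell ` zero_locus (vec.span (G i)))
              \<and> int (card (Supp (eval_map n ell ` zero_locus (vec.span (G i))))) \<le> (int n - aleph + 1) - 1)
         \<and> (\<forall>D. subcode (eval_map n ell ` UNIV) D \<and> int (card (Supp D)) \<le> (int n - aleph + 1) - 1
              \<longrightarrow> (\<exists>i<m. D \<subseteq> eval_map n ell ` zero_locus (vec.span (G i))))"
proof (intro conjI allI impI)
  have inj: "inj_on ell {..<n}" using ell_bij bij_betw_def by blast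
  fix i assume i: "i < m"
  show "subcode (eval_map n ell ` UNIV) (eval_map n ell ` zero_locus (vec.span (G i)))"
    by (rule subcode_image)
  let ?J = "{j. j < n \<and> ell j \<in> L i}"
  have sub: "Supp (eval_map n ell ` zero_locus (vec.span (G i))) \<subseteq> {..<n} - ?J"
  proof
    fix j assume "j \<in> Supp (eval_map n ell ` zero_locus (vec.span (G i)))"
    then obtain v where v: "v \<in> zero_locus (vec.span (G i))" "eval_map n ell v j \<noteq> 0"
      unfolding Supp_def by blast
    then have jn: "j < n" and nz: "lin_eval (ell j) v \<noteq> 0"
      unfolding eval_map_def by (auto split: if_splits)
    have "ell j \<notin> L i"
      using v(1) nz L_sub i unfolding zero_locus_def by blast
    then show "j \<in> {..<n} - ?J" using jn by auto
  qed
  have "ell ` ?J = L i"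
    using ell_bij i unfolding bij_betw_def by auto
  moreover have "inj_on ell ?J" using inj by (rule inj_on_subset) auto
  ultimately have cJ: "card ?J = card (L i)" using card_image by fastforce
  have "card ({..<n} - ?J) = n - card ?J"
    by (subst card_Diff_subset) auto
  moreover have "card ?J \<le> n"
    by (metis (no_types, lifting) card_lessThan card_mono finite_lessThan lessThan_iff mem_Collect_eq subsetI)
  ultimately have "int (card ({..<n} - ?J)) = int n - aleph"
    using cJ L_card i by simp
  moreover have "card (Supp (eval_map n ell ` zero_locus (vec.span (G i)))) \<le> card ({..<n} - ?J)"
    using sub by (intro card_mono) auto
  ultimately show "int (card (Supp (eval_map n ell ` zero_locus (vec.span (G i))))) \<le> (int n - aleph + 1) - 1"
    by linarith
next
  have inj: "inj_on ell {..<n}" using ell_bij bij_betw_def by blast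
  fix D assume D: "subcode (eval_map n ell ` UNIV) D \<and> int (card (Supp D)) \<le> (int n - aleph + 1) - 1"
  then have DC: "D \<subseteq> range (eval_map n ell)" unfolding subcode_def by auto
  have suppn: "Supp D \<subseteq> {..<n}"
  proof
    fix j assume "j \<in> Supp D"
    then obtain y where "y \<in> D" "y j \<noteq> 0" unfolding Supp_def by blast
    then show "j \<in> {..<n}" using DC unfolding eval_map_def by (auto split: if_splits)
  qed
  let ?Z = "{..<n} - Supp D"
  have cZ: "card ?Z = n - card (Supp D)" using suppn by (subst card_Diff_subset) (auto intro: finite_subset)
  have "card (Supp D) \<le> n" using suppn by (metis card_lessThan card_mono finite_lessThan)
  then have cZ': "int (card ?Z) \<ge> aleph" using cZ D by linarith
  let ?F = "ell ` ?Z"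
  have cF: "card ?F = card ?Z" using inj by (intro card_image) (rule inj_on_subset, auto)
  have Fsub: "?F \<subseteq> (\<Union>i<m. L i)" using ell_bij unfolding bij_betw_def by auto
  have vanish: "lin_eval f v = 0" if fF: "f \<in> ?F" and vD: "eval_map n ell v \<in> D" for f v
  proof -
    obtain j where j: "j < n" "j \<notin> Supp D" "f = ell j" using fF by blast
    then have "eval_map n ell v j = 0" using vD unfolding Supp_def by blast
    then show ?thesis using j unfolding eval_map_def by simp
  qed
  show "\<exists>i<m. D \<subseteq> eval_map n ell ` zero_locus (vec.span (G i))"
  proof (rule ccontr)
    assume nex: "\<not> ?thesis"
    have small: "int (card (?F \<inter> L i)) \<le> int (card (G i)) - 1" if i: "i < m" for i
    proof (rule ccontr)
      assume "\<not> ?thesis"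
      then have "card (G i) \<le> card (?F \<inter> L i)" by linarith
      then obtain S where S: "S \<subseteq> ?F \<inter> L i" "card S = card (G i)"
        by (meson obtain_subset_with_card_n)
      then have spS: "vec.span S = vec.span (G i)" using L_gen i by blast
      have "D \<subseteq> eval_map n ell ` zero_locus (vec.span (G i))"
      proof
        fix d assume d: "d \<in> D"
        then obtain v where v: "d = eval_map n ell v" using DC by blast
        have dv: "eval_map n ell v \<in> D" using d v by simp
        have "\<forall>s\<in>S. lin_eval s v = 0"
        proof
          fix s assume "s \<in> S"
          then have "s \<in> ?F" using S(1) by blast
          then show "lin_eval s v = 0" using vanish dv by blast
        qed
        then have "\<forall>l\<in>vec.span (G i). lin_eval l v = 0"
          using vanish_span[where S=S and v=v] spS by simp
        then have "v \<in> zero_locus (vec.span (G i))"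
          unfolding zero_locus_def by simp
        then show "d \<in> eval_map n ell ` zero_locus (vec.span (G i))" using v by blast
      qed
      then show False using nex i by blast
    qed
    have "?F = (\<Union>i<m. ?F \<inter> L i)" using Fsub by auto
    moreover have "card (\<Union>i<m. ?F \<inter> L i) \<le> (\<Sum>i<m. card (?F \<inter> L i))"
      by (rule card_UN_le) simp
    ultimately have "card ?F \<le> (\<Sum>i<m. card (?F \<inter> L i))"
      by simp
    then have "int (card ?F) \<le> int (\<Sum>i<m. card (?F \<inter> L i))"
      by (rule of_nat_mono)
    also have "\<dots> = (\<Sum>i<m. int (card (?F \<inter> L i)))"
      by (rule of_nat_sum)
    also have "\<dots> \<le> (\<Sum>i<m. (int (card (G i)) - 1))"
      by (intro sum_mono small) auto
    finally show False using cF cZ' aleph_def by linarith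
  qed
qed

end
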